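(* Let $\mathcal{G}$ be a groupoid and $K$ a commutative ring with unit. The $K$-SAC $K\mathcal{G}$ has a filtration $\{F_nK\mathcal{G}(p_0,p_1)\}_{n\ge0}$, $p_0,p_1\in\operatorname{Ob}\mathcal{G}$, such that $F_nK\mathcal{G}(q,q)=I\mathcal{G}(q,q)^n$ for all $q$ and $n\ge0$. The filtered $K$-SAC $K\mathcal{G}$ satisfies conditions (C1) and (C4).
   Context: $K\mathcal{G}$ has the same objects as $\mathcal{G}$ and $K\mathcal{G}(p_0,p_1)$ the free $K$-module on $\mathcal{G}(p_0,p_1)$, with bilinearly extended multiplication $\gamma_1\gamma_2:=\gamma_2\circ\gamma_1$. $I\mathcal{G}(q,q)$ is the augmentation ideal (kernel of $\sum a_i\gamma_i\mapsto\sum a_i$) of the group ring $K\mathcal{G}(q,q)$. A filtration on a $K$-SAC $\mathcal{R}$ (a small additive category with $K$-module hom-sets, $K$-bilinear multiplication, and an isomorphism in every non-zero hom-set) is a choice of $K$-submodules $\mathcal{R}(p_0,p_1)=F_0\supset F_1\supset\cdots$ with $F_{n_1}\mathcal{R}(p_0,p_1)\cdot F_{n_2}\mathcal{R}(p_1,p_2)\subset F_{n_1+n_2}\mathcal{R}(p_0,p_2)$. (C1): $\mathcal{R}(q,q)/F_1\mathcal{R}(q,q)\cong K$ for every object $q$. (C4): the multiplication $F_1\mathcal{R}(q,q)^{\otimes n}\to F_n\mathcal{R}(q,q)$ is surjective for every $q$ and $n\ge1$. *)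

theory Defs
  imports Main
begin

definition groupoid ::
  "'o set \<Rightarrow> 'm set \<Rightarrow> ('m \<Rightarrow> 'o) \<Rightarrow> ('m \<Rightarrow> 'o) \<Rightarrow> ('m \<Rightarrow> 'm \<Rightarrow> 'm) \<Rightarrow> ('o \<Rightarrow> 'm) \<Rightarrow> bool"
where
  "groupoid Obj Mor src tgt cmp ide \<longleftrightarrow>
     (\<forall>f\<in>Mor. src f \<in> Obj \<and> tgt f \<in> Obj) \<and>
     (\<forall>f\<in>Mor. \<forall>g\<in>Mor. tgt f = src g \<longrightarrow>
         cmp g f \<in> Mor \<and> src (cmp g f) = src f \<and> tgt (cmp g f) = tgt g) \<and>
     (\<forall>f\<in>Mor. \<forall>g\<in>Mor. \<forall>h\<in>Mor. tgt f = src g \<longrightarrow> tgt g = src h \<longrightarrow>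
         cmp h (cmp g f) = cmp (cmp h g) f) \<and>
     (\<forall>p\<in>Obj. ide p \<in> Mor \<and> src (ide p) = p \<and> tgt (ide p) = p) \<and>
     (\<forall>f\<in>Mor. cmp f (ide (src f)) = f \<and> cmp (ide (tgt f)) f = f) \<and>
     (\<forall>f\<in>Mor. \<exists>g\<in>Mor. src g = tgt f \<and> tgt g = src f \<and>
         cmp g f = ide (src f) \<and> cmp f g = ide (tgt f))"

definition hom :: "'m set \<Rightarrow> ('m \<Rightarrow> 'o) \<Rightarrow> ('m \<Rightarrow> 'o) \<Rightarrow> 'o \<Rightarrow> 'o \<Rightarrow> 'm set" where
  "hom Mor src tgt p0 p1 = {f \<in> Mor. src f = p0 \<and> tgt f = p1}"

definition supp :: "('m \<Rightarrow> 'k::zero) \<Rightarrow> 'm set" where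
  "supp a = {g. a g \<noteq> 0}"

text \<open>KG(p0,p1): the free K-module on G(p0,p1), realised as finitely supported
  K-valued functions supported in G(p0,p1).\<close>
definition KG :: "'m set \<Rightarrow> ('m \<Rightarrow> 'o) \<Rightarrow> ('m \<Rightarrow> 'o) \<Rightarrow> 'o \<Rightarrow> 'o \<Rightarrow> ('m \<Rightarrow> 'k::zero) set" where
  "KG Mor src tgt p0 p1 = {a. finite (supp a) \<and> supp a \<subseteq> hom Mor src tgt p0 p1}"

text \<open>Bilinearly extended multiplication with gamma1 gamma2 := gamma2 o gamma1.\<close>
definition kmult :: "('m \<Rightarrow> 'o) \<Rightarrow> ('m \<Rightarrow> 'o) \<Rightarrow> ('m \<Rightarrow> 'm \<Rightarrow> 'm)
    \<Rightarrow> ('m \<Rightarrow> 'k::comm_ring_1) \<Rightarrow> ('m \<Rightarrow> 'k) \<Rightarrow> ('m \<Rightarrow> 'k)" where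
  "kmult src tgt cmp a b = (\<lambda>h. \<Sum>(g1, g2) \<in> {(g1, g2). g1 \<in> supp a \<and> g2 \<in> supp b \<and>
        tgt g1 = src g2 \<and> cmp g2 g1 = h}. a g1 * b g2)"

definition kunit :: "('o \<Rightarrow> 'm) \<Rightarrow> 'o \<Rightarrow> ('m \<Rightarrow> 'k::comm_ring_1)" where
  "kunit ide q = (\<lambda>g. if g = ide q then 1 else 0)"

definition aug :: "('m \<Rightarrow> 'k::comm_ring_1) \<Rightarrow> 'k" where
  "aug a = (\<Sum>g\<in>supp a. a g)"

definition aug_ideal :: "'m set \<Rightarrow> ('m \<Rightarrow> 'o) \<Rightarrow> ('m \<Rightarrow> 'o) \<Rightarrow> 'o \<Rightarrow> ('m \<Rightarrow> 'k::comm_ring_1) set" where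
  "aug_ideal Mor src tgt q = {a \<in> KG Mor src tgt q q. aug a = 0}"

inductive_set add_span :: "('m \<Rightarrow> 'k::comm_ring_1) set \<Rightarrow> ('m \<Rightarrow> 'k) set" for S where
  gen: "x \<in> S \<Longrightarrow> x \<in> add_span S"
| zero: "(\<lambda>_. 0) \<in> add_span S"
| add: "x \<in> add_span S \<Longrightarrow> y \<in> add_span S \<Longrightarrow> (\<lambda>g. x g + y g) \<in> add_span S"
| neg: "x \<in> add_span S \<Longrightarrow> (\<lambda>g. - x g) \<in> add_span S"

fun aug_ideal_pow :: "'m set \<Rightarrow> ('m \<Rightarrow> 'o) \<Rightarrow> ('m \<Rightarrow> 'o) \<Rightarrow> ('m \<Rightarrow> 'm \<Rightarrow> 'm) \<Rightarrow> 'o \<Rightarrow> nat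
    \<Rightarrow> ('m \<Rightarrow> 'k::comm_ring_1) set" where
  "aug_ideal_pow Mor src tgt cmp q 0 = KG Mor src tgt q q"
| "aug_ideal_pow Mor src tgt cmp q (Suc n) =
     add_span {kmult src tgt cmp x y | x y. x \<in> aug_ideal_pow Mor src tgt cmp q n \<and>
                                               y \<in> aug_ideal Mor src tgt q}"

definition is_submodule :: "('m \<Rightarrow> 'k::comm_ring_1) set \<Rightarrow> ('m \<Rightarrow> 'k) set \<Rightarrow> bool" where
  "is_submodule M A \<longleftrightarrow> M \<subseteq> A \<and> (\<lambda>_. 0) \<in> M \<and>
     (\<forall>x\<in>M. \<forall>y\<in>M. (\<lambda>g. x g + y g) \<in> M) \<and>
     (\<forall>c. \<forall>x\<in>M. (\<lambda>g. c * x g) \<in> M)"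

definition is_filtration :: "'o set \<Rightarrow> 'm set \<Rightarrow> ('m \<Rightarrow> 'o) \<Rightarrow> ('m \<Rightarrow> 'o) \<Rightarrow> ('m \<Rightarrow> 'm \<Rightarrow> 'm)
    \<Rightarrow> (nat \<Rightarrow> 'o \<Rightarrow> 'o \<Rightarrow> ('m \<Rightarrow> 'k::comm_ring_1) set) \<Rightarrow> bool" where
  "is_filtration Obj Mor src tgt cmp F \<longleftrightarrow>
     (\<forall>p0\<in>Obj. \<forall>p1\<in>Obj.
        F 0 p0 p1 = KG Mor src tgt p0 p1 \<and>
        (\<forall>n. is_submodule (F n p0 p1) (KG Mor src tgt p0 p1)) \<and>
        (\<forall>n. F (Suc n) p0 p1 \<subseteq> F n p0 p1)) \<and>
     (\<forall>p0\<in>Obj. \<forall>p1\<in>Obj. \<forall>p2\<in>Obj. \<forall>n1 n2. \<forall>a\<in>F n1 p0 p1. \<forall>b\<in>F n2 p1 p2.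
        kmult src tgt cmp a b \<in> F (n1 + n2) p0 p2)"

text \<open>(C1): R(q,q)/F_1 R(q,q) is isomorphic to K as a K-module, i.e. there is a
  surjective K-linear map R(q,q) \<rightarrow> K whose kernel is F_1 R(q,q).\<close>
definition cond_C1 :: "'o set \<Rightarrow> 'm set \<Rightarrow> ('m \<Rightarrow> 'o) \<Rightarrow> ('m \<Rightarrow> 'o)
    \<Rightarrow> (nat \<Rightarrow> 'o \<Rightarrow> 'o \<Rightarrow> ('m \<Rightarrow> 'k::comm_ring_1) set) \<Rightarrow> bool" where
  "cond_C1 Obj Mor src tgt F \<longleftrightarrow>
     (\<forall>q\<in>Obj. \<exists>\<phi> :: ('m \<Rightarrow> 'k) \<Rightarrow> 'k.
        (\<forall>x\<in>KG Mor src tgt q q. \<forall>y\<in>KG Mor src tgt q q. \<phi> (\<lambda>g. x g + y g) = \<phi> x + \<phi> y) \<and>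
        (\<forall>c. \<forall>x\<in>KG Mor src tgt q q. \<phi> (\<lambda>g. c * x g) = c * \<phi> x) \<and>
        \<phi> ` KG Mor src tgt q q = UNIV \<and>
        {x \<in> KG Mor src tgt q q. \<phi> x = 0} = F 1 q q)"

text \<open>(C4): the multiplication F_1^{\<otimes>n} \<rightarrow> F_n is surjective, i.e. F_n R(q,q) is
  contained in the additive span of products x1 \<cdots> xn with all xi in F_1 R(q,q)
  (the image of the tensor power).\<close>
definition cond_C4 :: "'o set \<Rightarrow> ('m \<Rightarrow> 'o) \<Rightarrow> ('m \<Rightarrow> 'o) \<Rightarrow> ('m \<Rightarrow> 'm \<Rightarrow> 'm) \<Rightarrow> ('o \<Rightarrow> 'm)
    \<Rightarrow> (nat \<Rightarrow> 'o \<Rightarrow> 'o \<Rightarrow> ('m \<Rightarrow> 'k::comm_ring_1) set) \<Rightarrow> bool" where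
  "cond_C4 Obj src tgt cmp ide F \<longleftrightarrow>
     (\<forall>q\<in>Obj. \<forall>n\<ge>1.
        F n q q \<subseteq> add_span {foldr (kmult src tgt cmp) xs (kunit ide q) | xs.
                              length xs = n \<and> set xs \<subseteq> F 1 q q})"

end

theory Submission imports Defs begin

lemma supp_add: "supp (\<lambda>g. x g + (y g::'k::comm_ring_1)) \<subseteq> supp x \<union> supp y"
  by (auto simp: supp_def)
lemma supp_neg[simp]: "supp (\<lambda>g. - (x g::'k::comm_ring_1)) = supp x"
  by (auto simp: supp_def)
lemma supp_scal: "supp (\<lambda>g. c * (x g::'k::comm_ring_1)) \<subseteq> supp x"
  by (auto simp: supp_def)
lemma supp_zero[simp]: "supp (\<lambda>_. 0) = {}"
  by (auto simp: supp_def)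

lemma if_distrib_add: "(if P then (u::'k::comm_ring_1) + v else 0) = (if P then u else 0) + (if P then v else 0)"
  by simp

lemma if0_mult: "(if Q then u else 0) * c = (if Q then u * c else (0::'k::comm_ring_1))" by simp
lemma mult_if0: "c * (if Q then u else 0) = (if Q then c * u else (0::'k::comm_ring_1))" by simp

lemma kmult_alt:
  fixes a b :: "'m \<Rightarrow> 'k::comm_ring_1"
  assumes "finite S" "finite T" "supp a \<subseteq> S" "supp b \<subseteq> T"
  shows "kmult src tgt cmp a b h = (\<Sum>g1\<in>S. \<Sum>g2\<in>T. if tgt g1 = src g2 \<and> cmp g2 g1 = h then a g1 * b g2 else 0)"
proof -
  let ?D = "{(g1, g2). g1 \<in> supp a \<and> g2 \<in> supp b \<and> tgt g1 = src g2 \<and> cmp g2 g1 = h}"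
  let ?f = "\<lambda>(g1,g2). if tgt g1 = src g2 \<and> cmp g2 g1 = h then a g1 * b g2 else (0::'k)"
  have "(\<Sum>g1\<in>S. \<Sum>g2\<in>T. ?f (g1,g2)) = (\<Sum>p\<in>S\<times>T. ?f p)" by (simp add: sum.cartesian_product)
  also have "\<dots> = (\<Sum>p\<in>?D. ?f p)"
    apply (rule sum.mono_neutral_right) using assms by (auto simp: supp_def split: if_splits)
  also have "\<dots> = (\<Sum>(g1,g2)\<in>?D. a g1 * b g2)" by (rule sum.cong) auto
  finally show ?thesis by (simp add: kmult_def)
qed

lemma kmult_add_left:
  fixes x y b :: "'m \<Rightarrow> 'k::comm_ring_1"
  assumes "finite (supp x)" "finite (supp y)" "finite (supp b)"
  shows "kmult src tgt cmp (\<lambda>g. x g + y g) b = (\<lambda>h. kmult src tgt cmp x b h + kmult src tgt cmp y b h)"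
proof
  fix h
  let ?S = "supp x \<union> supp y"
  have f: "finite ?S" using assms by auto
  show "kmult src tgt cmp (\<lambda>g. x g + y g) b h = kmult src tgt cmp x b h + kmult src tgt cmp y b h"
    unfolding kmult_alt[OF f assms(3) supp_add order_refl]
      kmult_alt[OF f assms(3) Un_upper1 order_refl] kmult_alt[OF f assms(3) Un_upper2 order_refl]
    by (simp only: sum.distrib[symmetric] distrib_right if_distrib_add)
qed

lemma kmult_add_right:
  fixes x y a :: "'m \<Rightarrow> 'k::comm_ring_1"
  assumes "finite (supp x)" "finite (supp y)" "finite (supp a)"
  shows "kmult src tgt cmp a (\<lambda>g. x g + y g) = (\<lambda>h. kmult src tgt cmp a x h + kmult src tgt cmp a y h)"
proof
  fix h
  let ?S = "supp x \<union> supp y"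
  have f: "finite ?S" using assms by auto
  show "kmult src tgt cmp a (\<lambda>g. x g + y g) h = kmult src tgt cmp a x h + kmult src tgt cmp a y h"
    unfolding kmult_alt[OF assms(3) f order_refl supp_add]
      kmult_alt[OF assms(3) f order_refl Un_upper1] kmult_alt[OF assms(3) f order_refl Un_upper2]
    by (simp only: sum.distrib[symmetric] distrib_left if_distrib_add)
qed

lemma kmult_scal_left:
  fixes x b :: "'m \<Rightarrow> 'k::comm_ring_1"
  assumes "finite (supp x)" "finite (supp b)"
  shows "kmult src tgt cmp (\<lambda>g. c * x g) b = (\<lambda>h. c * kmult src tgt cmp x b h)"
proof
  fix h
  show "kmult src tgt cmp (\<lambda>g. c * x g) b h = c * kmult src tgt cmp x b h"
    unfolding kmult_alt[OF assms(1) assms(2) supp_scal order_refl]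
      kmult_alt[OF assms(1) assms(2) order_refl order_refl]
    by (auto simp: sum_distrib_left mult.assoc intro!: sum.cong)
qed

lemma kmult_scal_right:
  fixes x a :: "'m \<Rightarrow> 'k::comm_ring_1"
  assumes "finite (supp x)" "finite (supp a)"
  shows "kmult src tgt cmp a (\<lambda>g. c * x g) = (\<lambda>h. c * kmult src tgt cmp a x h)"
proof
  fix h
  show "kmult src tgt cmp a (\<lambda>g. c * x g) h = c * kmult src tgt cmp a x h"
    unfolding kmult_alt[OF assms(2) assms(1) order_refl supp_scal]
      kmult_alt[OF assms(2) assms(1) order_refl order_refl]
    by (auto simp: sum_distrib_left mult.left_commute intro!: sum.cong)
qed

lemma kmult_neg_left:
  fixes x b :: "'m \<Rightarrow> 'k::comm_ring_1"
  assumes "finite (supp x)" "finite (supp b)"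
  shows "kmult src tgt cmp (\<lambda>g. - x g) b = (\<lambda>h. - kmult src tgt cmp x b h)"
  using kmult_scal_left[OF assms, where c="-1"] by simp

lemma kmult_neg_right:
  fixes x a :: "'m \<Rightarrow> 'k::comm_ring_1"
  assumes "finite (supp x)" "finite (supp a)"
  shows "kmult src tgt cmp a (\<lambda>g. - x g) = (\<lambda>h. - kmult src tgt cmp a x h)"
  using kmult_scal_right[OF assms, where c="-1"] by simp

lemma kmult_zero_left[simp]: "kmult src tgt cmp (\<lambda>_. 0) b = (\<lambda>_. 0)"
  by (simp add: kmult_def supp_def)
lemma kmult_zero_right[simp]: "kmult src tgt cmp a (\<lambda>_. 0) = (\<lambda>_. 0)"
  by (simp add: kmult_def supp_def)

lemma kmult_supp:
  "supp (kmult src tgt cmp a b) \<subseteq> (\<lambda>(g1,g2). cmp g2 g1) ` {(g1,g2). g1 \<in> supp a \<and> g2 \<in> supp b \<and> tgt g1 = src g2}"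
proof
  fix h assume "h \<in> supp (kmult src tgt cmp a b)"
  have "{(g1, g2). g1 \<in> supp a \<and> g2 \<in> supp b \<and> tgt g1 = src g2 \<and> cmp g2 g1 = h} \<noteq> {}"
  proof
    assume "{(g1, g2). g1 \<in> supp a \<and> g2 \<in> supp b \<and> tgt g1 = src g2 \<and> cmp g2 g1 = h} = {}"
    hence "kmult src tgt cmp a b h = 0" unfolding kmult_def by (simp only: sum.empty)
    thus False using \<open>h \<in> supp (kmult src tgt cmp a b)\<close> by (simp add: supp_def)
  qed
  then obtain g1 g2 where "g1 \<in> supp a" "g2 \<in> supp b" "tgt g1 = src g2" "cmp g2 g1 = h" by blast
  thus "h \<in> (\<lambda>(g1,g2). cmp g2 g1) ` {(g1,g2). g1 \<in> supp a \<and> g2 \<in> supp b \<and> tgt g1 = src g2}"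
    by (auto intro!: image_eqI[of _ _ "(g1,g2)"])
qed

lemma kmult_suppE:
  assumes "x \<in> supp (kmult src tgt cmp a b)"
  obtains g1 g2 where "g1 \<in> supp a" "g2 \<in> supp b" "tgt g1 = src g2" "x = cmp g2 g1"
proof -
  have "x \<in> (\<lambda>(g1,g2). cmp g2 g1) ` {(g1,g2). g1 \<in> supp a \<and> g2 \<in> supp b \<and> tgt g1 = src g2}"
    by (rule subsetD[OF kmult_supp assms])
  then obtain p where p: "p \<in> {(g1,g2). g1 \<in> supp a \<and> g2 \<in> supp b \<and> tgt g1 = src g2}"
    "x = (\<lambda>(g1,g2). cmp g2 g1) p" by (rule imageE)
  obtain g1 g2 where "p = (g1,g2)" by (cases p)
  thus thesis using p by (intro that[of g1 g2]) auto
qed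

lemma kmult_supp_finite:
  assumes "finite (supp a)" "finite (supp b)"
  shows "finite (supp (kmult src tgt cmp a b))"
proof -
  have "finite {(g1,g2). g1 \<in> supp a \<and> g2 \<in> supp b \<and> tgt g1 = src g2}"
    by (rule finite_subset[of _ "supp a \<times> supp b"]) (use assms in auto)
  hence "finite ((\<lambda>(g1,g2). cmp g2 g1) ` {(g1,g2). g1 \<in> supp a \<and> g2 \<in> supp b \<and> tgt g1 = src g2})" by (rule finite_imageI)
  thus ?thesis using kmult_supp by (rule finite_subset[rotated])
qed

lemma aug_alt:
  fixes a :: "'m \<Rightarrow> 'k::comm_ring_1"
  assumes "finite S" "supp a \<subseteq> S"
  shows "aug a = (\<Sum>g\<in>S. a g)"
  unfolding aug_def by (rule sum.mono_neutral_left) (use assms in \<open>auto simp: supp_def\<close>)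

lemma aug_add: 
  fixes x y :: "'m \<Rightarrow> 'k::comm_ring_1"
  assumes "finite (supp x)" "finite (supp y)"
  shows "aug (\<lambda>g. x g + y g) = aug x + aug y"
proof -
  have f: "finite (supp x \<union> supp y)" using assms by auto
  show ?thesis using aug_alt[OF f supp_add] aug_alt[OF f Un_upper1] aug_alt[OF f Un_upper2]
    by (simp add: sum.distrib)
qed

lemma aug_scal:
  fixes x :: "'m \<Rightarrow> 'k::comm_ring_1"
  assumes "finite (supp x)"
  shows "aug (\<lambda>g. c * x g) = c * aug x"
  using aug_alt[OF assms supp_scal] aug_alt[OF assms order_refl]
  by (simp add: sum_distrib_left)

lemma aug_neg:
  fixes x :: "'m \<Rightarrow> 'k::comm_ring_1"
  assumes "finite (supp x)"
  shows "aug (\<lambda>g. - x g) = - aug x"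
  using aug_scal[OF assms, where c="-1"] by simp

lemma aug_zero[simp]: "aug (\<lambda>_. (0::'k::comm_ring_1)) = 0"
  by (simp add: aug_def)

lemma span_sub:
  assumes "x \<in> add_span S" "S \<subseteq> M" "(\<lambda>_. 0) \<in> M"
    "\<And>x y. x \<in> M \<Longrightarrow> y \<in> M \<Longrightarrow> (\<lambda>g. x g + y g) \<in> M"
    "\<And>x. x \<in> M \<Longrightarrow> (\<lambda>g. - x g) \<in> M"
  shows "x \<in> M"
  using assms(1)
proof induct
  case (gen x) thus ?case using assms(2) by blast
next
  case zero show ?case by (rule assms(3))
next
  case (add x y) from add(2) add(4) show ?case by (rule assms(4))
next
  case (neg x) from neg(2) show ?case by (rule assms(5))
qed

lemma collapse:
  assumes "finite U" "x \<in> U" "\<And>k. P k \<Longrightarrow> k = x"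
  shows "(\<Sum>k\<in>U. if P k then f k else 0) = (if P x then f x else (0::'k::comm_ring_1))"
proof -
  have "(\<Sum>k\<in>U. if P k then f k else 0) = (\<Sum>k\<in>U. if k = x then (if P x then f x else 0) else 0)"
  proof (rule sum.cong[OF refl])
    fix k show "(if P k then f k else 0) = (if k = x then (if P x then f x else 0) else 0)"
      using assms(3)[of k] by (cases "k = x") auto
  qed
  also have "\<dots> = (if P x then f x else 0)" using assms(1,2) by (simp add: sum.delta)
  finally show ?thesis .
qed

locale grpd =
  fixes Obj :: "'o set" and Mor :: "'m set" and src tgt :: "'m \<Rightarrow> 'o"
    and cmp :: "'m \<Rightarrow> 'm \<Rightarrow> 'm" and ide :: "'o \<Rightarrow> 'm"
  assumes grp: "groupoid Obj Mor src tgt cmp ide"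
begin

lemma g1: "\<forall>f\<in>Mor. src f \<in> Obj \<and> tgt f \<in> Obj"
  using grp unfolding groupoid_def by (elim conjE) assumption

lemma g2: "\<forall>f\<in>Mor. \<forall>g\<in>Mor. tgt f = src g \<longrightarrow>
         cmp g f \<in> Mor \<and> src (cmp g f) = src f \<and> tgt (cmp g f) = tgt g"
  using grp unfolding groupoid_def by (elim conjE) assumption

lemma g3: "\<forall>f\<in>Mor. \<forall>g\<in>Mor. \<forall>h\<in>Mor. tgt f = src g \<longrightarrow> tgt g = src h \<longrightarrow>
         cmp h (cmp g f) = cmp (cmp h g) f"
  using grp unfolding groupoid_def by (elim conjE) assumption

lemma g4: "\<forall>p\<in>Obj. ide p \<in> Mor \<and> src (ide p) = p \<and> tgt (ide p) = p"
  using grp unfolding groupoid_def by (elim conjE) assumption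

lemma g5: "\<forall>f\<in>Mor. cmp f (ide (src f)) = f \<and> cmp (ide (tgt f)) f = f"
  using grp unfolding groupoid_def by (elim conjE) assumption

lemma g6: "\<forall>f\<in>Mor. \<exists>g\<in>Mor. src g = tgt f \<and> tgt g = src f \<and>
         cmp g f = ide (src f) \<and> cmp f g = ide (tgt f)"
  using grp unfolding groupoid_def by (elim conjE) assumption

lemma srcO: "f \<in> Mor \<Longrightarrow> src f \<in> Obj" and tgtO: "f \<in> Mor \<Longrightarrow> tgt f \<in> Obj"
  using g1 by auto
lemma cmpM: "f \<in> Mor \<Longrightarrow> g \<in> Mor \<Longrightarrow> tgt f = src g \<Longrightarrow> cmp g f \<in> Mor"
  and src_cmp: "f \<in> Mor \<Longrightarrow> g \<in> Mor \<Longrightarrow> tgt f = src g \<Longrightarrow> src (cmp g f) = src f"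
  and tgt_cmp: "f \<in> Mor \<Longrightarrow> g \<in> Mor \<Longrightarrow> tgt f = src g \<Longrightarrow> tgt (cmp g f) = tgt g"
  using g2 by auto
lemma cassoc: "f \<in> Mor \<Longrightarrow> g \<in> Mor \<Longrightarrow> h \<in> Mor \<Longrightarrow> tgt f = src g \<Longrightarrow> tgt g = src h \<Longrightarrow>
   cmp h (cmp g f) = cmp (cmp h g) f"
  using g3 by auto
lemma ideM: "p \<in> Obj \<Longrightarrow> ide p \<in> Mor" and src_ide: "p \<in> Obj \<Longrightarrow> src (ide p) = p"
  and tgt_ide: "p \<in> Obj \<Longrightarrow> tgt (ide p) = p"
  using g4 by auto
lemma idl: "f \<in> Mor \<Longrightarrow> cmp f (ide (src f)) = f" and idr: "f \<in> Mor \<Longrightarrow> cmp (ide (tgt f)) f = f"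
  using g5 by auto
lemma invex: "f \<in> Mor \<Longrightarrow> \<exists>g\<in>Mor. src g = tgt f \<and> tgt g = src f \<and>
         cmp g f = ide (src f) \<and> cmp f g = ide (tgt f)"
  using g6 by auto

definition fin :: "('m \<Rightarrow> 'k::comm_ring_1) \<Rightarrow> bool" where
  "fin a \<longleftrightarrow> finite (supp a) \<and> supp a \<subseteq> Mor"

lemma fin_KG: "a \<in> KG Mor src tgt p0 p1 \<Longrightarrow> fin a"
  by (auto simp: KG_def fin_def hom_def)

lemma KG_finite: "a \<in> KG Mor src tgt p0 p1 \<Longrightarrow> finite (supp a)"
  by (auto simp: KG_def)

lemma KG_add: "x \<in> KG Mor src tgt p0 p1 \<Longrightarrow> y \<in> KG Mor src tgt p0 p1 \<Longrightarrow>
   (\<lambda>g. x g + (y g::'k::comm_ring_1)) \<in> KG Mor src tgt p0 p1"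
  using supp_add[of x y] finite_subset[OF supp_add[of x y]] unfolding KG_def by auto
lemma KG_neg: "x \<in> KG Mor src tgt p0 p1 \<Longrightarrow> (\<lambda>g. - (x g::'k::comm_ring_1)) \<in> KG Mor src tgt p0 p1"
  unfolding KG_def by auto
lemma KG_scal: "x \<in> KG Mor src tgt p0 p1 \<Longrightarrow> (\<lambda>g. c * (x g::'k::comm_ring_1)) \<in> KG Mor src tgt p0 p1"
  using supp_scal[of c x] finite_subset[OF supp_scal[of c x]] unfolding KG_def by auto
lemma KG_zero: "(\<lambda>_. 0::'k::comm_ring_1) \<in> KG Mor src tgt p0 p1"
  unfolding KG_def by auto

lemma fin_mul: assumes "fin a" "fin b" shows "fin (kmult src tgt cmp a b)"
proof -
  have "supp (kmult src tgt cmp a b) \<subseteq> Mor"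
  proof
    fix x assume "x \<in> supp (kmult src tgt cmp a b)"
    then obtain g1 g2 where gg: "g1 \<in> supp a" "g2 \<in> supp b" "tgt g1 = src g2" "x = cmp g2 g1"
      by (rule kmult_suppE)
    have "g1 \<in> Mor" "g2 \<in> Mor" using gg(1,2) assms unfolding fin_def by auto
    thus "x \<in> Mor" using gg(3,4) cmpM by simp
  qed
  thus ?thesis using assms kmult_supp_finite[of a b src tgt cmp] unfolding fin_def by auto
qed

lemma KG_mul: "a \<in> KG Mor src tgt p0 p1 \<Longrightarrow> b \<in> KG Mor src tgt p1 p2 \<Longrightarrow>
   kmult src tgt cmp a b \<in> KG Mor src tgt p0 p2"
proof -
  assume a: "a \<in> KG Mor src tgt p0 p1" and b: "b \<in> KG Mor src tgt p1 p2"
  have "supp (kmult src tgt cmp a b) \<subseteq> hom Mor src tgt p0 p2"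
  proof
    fix x assume "x \<in> supp (kmult src tgt cmp a b)"
    then obtain g1 g2 where gg: "g1 \<in> supp a" "g2 \<in> supp b" "tgt g1 = src g2" "x = cmp g2 g1"
      by (rule kmult_suppE)
    have "g1 \<in> hom Mor src tgt p0 p1" "g2 \<in> hom Mor src tgt p1 p2" using gg a b by (auto simp: KG_def)
    thus "x \<in> hom Mor src tgt p0 p2" using gg cmpM src_cmp tgt_cmp by (simp add: hom_def)
  qed
  thus ?thesis using a b kmult_supp_finite[of a b src tgt cmp] by (simp add: KG_def)
qed

lemma mul_assoc:
  fixes a b c :: "'m \<Rightarrow> 'k::comm_ring_1"
  assumes fa: "fin a" and fb: "fin b" and fc: "fin c"
  shows "kmult src tgt cmp (kmult src tgt cmp a b) c = kmult src tgt cmp a (kmult src tgt cmp b c)"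
proof
  fix h
  define A where "A = supp a"
  define B where "B = supp b"
  define C where "C = supp c"
  have fA: "finite A" and fB: "finite B" and fC: "finite C"
    and MA: "A \<subseteq> Mor" and MB: "B \<subseteq> Mor" and MC: "C \<subseteq> Mor"
    and sA: "supp a \<subseteq> A" and sB: "supp b \<subseteq> B" and sC: "supp c \<subseteq> C"
    using fa fb fc by (auto simp: fin_def A_def B_def C_def)
  define U where "U = (\<lambda>(g1,g2). cmp g2 g1) ` (A \<times> B)"
  define V where "V = (\<lambda>(g2,g3). cmp g3 g2) ` (B \<times> C)"
  have fU: "finite U" using fA fB by (simp add: U_def)
  have fV: "finite V" using fB fC by (simp add: V_def)
  have sU: "supp (kmult src tgt cmp a b) \<subseteq> U"
    using kmult_supp[of src tgt cmp a b] by (auto simp: U_def A_def B_def)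
  have sV: "supp (kmult src tgt cmp b c) \<subseteq> V"
    using kmult_supp[of src tgt cmp b c] by (auto simp: V_def C_def B_def)
  define T where "T = (\<lambda>g1 g2 g3. if tgt g1 = src g2 \<and> tgt g2 = src g3 \<and> cmp g3 (cmp g2 g1) = h
      then a g1 * b g2 * c g3 else 0)"
  have "kmult src tgt cmp (kmult src tgt cmp a b) c h =
      (\<Sum>k\<in>U. \<Sum>g3\<in>C. if tgt k = src g3 \<and> cmp g3 k = h then kmult src tgt cmp a b k * c g3 else 0)"
    by (rule kmult_alt[OF fU fC sU sC])
  also have "\<dots> = (\<Sum>k\<in>U. \<Sum>g3\<in>C. \<Sum>g1\<in>A. \<Sum>g2\<in>B. if tgt g1 = src g2 \<and> cmp g2 g1 = k \<and> tgt k = src g3 \<and> cmp g3 k = h then a g1 * b g2 * c g3 else 0)"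
    apply (intro sum.cong refl)
    subgoal for k g3
      by (cases "tgt k = src g3"; cases "cmp g3 k = h") (simp_all add: kmult_alt[OF fA fB sA sB] sum_distrib_right if0_mult)
    done
  also have "\<dots> = (\<Sum>k\<in>U. \<Sum>g1\<in>A. \<Sum>g3\<in>C. \<Sum>g2\<in>B. if tgt g1 = src g2 \<and> cmp g2 g1 = k \<and> tgt k = src g3 \<and> cmp g3 k = h then a g1 * b g2 * c g3 else 0)"
    by (rule sum.cong[OF refl], rule sum.swap)
  also have "\<dots> = (\<Sum>k\<in>U. \<Sum>g1\<in>A. \<Sum>g2\<in>B. \<Sum>g3\<in>C. if tgt g1 = src g2 \<and> cmp g2 g1 = k \<and> tgt k = src g3 \<and> cmp g3 k = h then a g1 * b g2 * c g3 else 0)"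
    by (rule sum.cong[OF refl], rule sum.cong[OF refl], rule sum.swap)
  also have "\<dots> = (\<Sum>g1\<in>A. \<Sum>k\<in>U. \<Sum>g2\<in>B. \<Sum>g3\<in>C. if tgt g1 = src g2 \<and> cmp g2 g1 = k \<and> tgt k = src g3 \<and> cmp g3 k = h then a g1 * b g2 * c g3 else 0)"
    by (rule sum.swap)
  also have "\<dots> = (\<Sum>g1\<in>A. \<Sum>g2\<in>B. \<Sum>k\<in>U. \<Sum>g3\<in>C. if tgt g1 = src g2 \<and> cmp g2 g1 = k \<and> tgt k = src g3 \<and> cmp g3 k = h then a g1 * b g2 * c g3 else 0)"
    by (rule sum.cong[OF refl], rule sum.swap)
  also have "\<dots> = (\<Sum>g1\<in>A. \<Sum>g2\<in>B. \<Sum>g3\<in>C. \<Sum>k\<in>U. if tgt g1 = src g2 \<and> cmp g2 g1 = k \<and> tgt k = src g3 \<and> cmp g3 k = h then a g1 * b g2 * c g3 else 0)"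
    by (rule sum.cong[OF refl], rule sum.cong[OF refl], rule sum.swap)
  also have "\<dots> = (\<Sum>g1\<in>A. \<Sum>g2\<in>B. \<Sum>g3\<in>C. T g1 g2 g3)"
    apply (intro sum.cong refl)
    subgoal for g1 g2 g3
      apply (subst collapse[OF fU, where x="cmp g2 g1"])
      using subsetD[OF MA, of g1] subsetD[OF MB, of g2] by (auto simp: U_def T_def tgt_cmp)
    done
  finally have L: "kmult src tgt cmp (kmult src tgt cmp a b) c h = (\<Sum>g1\<in>A. \<Sum>g2\<in>B. \<Sum>g3\<in>C. T g1 g2 g3)" .
  have "kmult src tgt cmp a (kmult src tgt cmp b c) h =
      (\<Sum>g1\<in>A. \<Sum>k\<in>V. if tgt g1 = src k \<and> cmp k g1 = h then a g1 * kmult src tgt cmp b c k else 0)"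
    by (rule kmult_alt[OF fA fV sA sV])
  also have "\<dots> = (\<Sum>g1\<in>A. \<Sum>k\<in>V. \<Sum>g2\<in>B. \<Sum>g3\<in>C. if tgt g2 = src g3 \<and> cmp g3 g2 = k \<and> tgt g1 = src k \<and> cmp k g1 = h then a g1 * (b g2 * c g3) else 0)"
    apply (intro sum.cong refl)
    subgoal for g1 k
      by (cases "tgt g1 = src k"; cases "cmp k g1 = h") (simp_all add: kmult_alt[OF fB fC sB sC] sum_distrib_left mult_if0)
    done
  also have "\<dots> = (\<Sum>g1\<in>A. \<Sum>g2\<in>B. \<Sum>k\<in>V. \<Sum>g3\<in>C. if tgt g2 = src g3 \<and> cmp g3 g2 = k \<and> tgt g1 = src k \<and> cmp k g1 = h then a g1 * (b g2 * c g3) else 0)"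
    by (rule sum.cong[OF refl], rule sum.swap)
  also have "\<dots> = (\<Sum>g1\<in>A. \<Sum>g2\<in>B. \<Sum>g3\<in>C. \<Sum>k\<in>V. if tgt g2 = src g3 \<and> cmp g3 g2 = k \<and> tgt g1 = src k \<and> cmp k g1 = h then a g1 * (b g2 * c g3) else 0)"
    by (rule sum.cong[OF refl], rule sum.cong[OF refl], rule sum.swap)
  also have "\<dots> = (\<Sum>g1\<in>A. \<Sum>g2\<in>B. \<Sum>g3\<in>C. T g1 g2 g3)"
    apply (intro sum.cong refl)
    subgoal for g1 g2 g3
      apply (subst collapse[OF fV, where x="cmp g3 g2"])
      using subsetD[OF MA, of g1] subsetD[OF MB, of g2] subsetD[OF MC, of g3] by (auto simp: V_def T_def src_cmp cassoc mult.assoc)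
    done
  finally show "kmult src tgt cmp (kmult src tgt cmp a b) c h = kmult src tgt cmp a (kmult src tgt cmp b c) h"
    using L by simp
qed


lemma mul_kunit_left:
  fixes a :: "'m \<Rightarrow> 'k::comm_ring_1"
  assumes p: "p0 \<in> Obj" and a: "a \<in> KG Mor src tgt p0 p1"
  shows "kmult src tgt cmp (kunit ide p0) a = a"
proof
  fix h
  have s1: "supp (kunit ide p0 :: 'm \<Rightarrow> 'k) \<subseteq> {ide p0}" by (auto simp: supp_def kunit_def)
  have fa: "finite (supp a)" using a by (simp add: KG_def)
  have sa: "\<And>g. g \<in> supp a \<Longrightarrow> g \<in> Mor \<and> src g = p0" using a by (auto simp: KG_def hom_def)
  have "kmult src tgt cmp (kunit ide p0) a h =
     (\<Sum>g2\<in>supp a. if tgt (ide p0) = src g2 \<and> cmp g2 (ide p0) = h then kunit ide p0 (ide p0) * a g2 else 0)"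
    using kmult_alt[OF _ fa s1 order_refl] by simp
  also have "\<dots> = (\<Sum>g2\<in>supp a. if h = g2 then a g2 else 0)"
    apply (rule sum.cong[OF refl])
    using sa p by (auto simp: kunit_def tgt_ide dest: idl)
  also have "\<dots> = a h" using fa by (simp add: sum.delta) (simp add: supp_def)
  finally show "kmult src tgt cmp (kunit ide p0) a h = a h" .
qed

lemma mul_kunit_right:
  fixes a :: "'m \<Rightarrow> 'k::comm_ring_1"
  assumes p: "p1 \<in> Obj" and a: "a \<in> KG Mor src tgt p0 p1"
  shows "kmult src tgt cmp a (kunit ide p1) = a"
proof
  fix h
  have s1: "supp (kunit ide p1 :: 'm \<Rightarrow> 'k) \<subseteq> {ide p1}" by (auto simp: supp_def kunit_def)
  have fa: "finite (supp a)" using a by (simp add: KG_def)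
  have sa: "\<And>g. g \<in> supp a \<Longrightarrow> g \<in> Mor \<and> tgt g = p1" using a by (auto simp: KG_def hom_def)
  have "kmult src tgt cmp a (kunit ide p1) h =
     (\<Sum>g1\<in>supp a. if tgt g1 = src (ide p1) \<and> cmp (ide p1) g1 = h then a g1 * kunit ide p1 (ide p1) else 0)"
    using kmult_alt[OF fa _ order_refl s1] by simp
  also have "\<dots> = (\<Sum>g1\<in>supp a. if h = g1 then a g1 else 0)"
    apply (rule sum.cong[OF refl])
    using sa p by (auto simp: kunit_def src_ide dest: idr)
  also have "\<dots> = a h" using fa by (simp add: sum.delta) (simp add: supp_def)
  finally show "kmult src tgt cmp a (kunit ide p1) h = a h" .
qed

lemma kunit_KG: "p \<in> Obj \<Longrightarrow> (kunit ide p :: 'm \<Rightarrow> 'k::comm_ring_1) \<in> KG Mor src tgt p p"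
  by (auto simp: KG_def hom_def supp_def kunit_def ideM src_ide tgt_ide intro: finite_subset[of _ "{ide p}"])

lemma aug_delta: "aug (\<lambda>x. if x = g then (1::'k::comm_ring_1) else 0) = 1"
  by (subst aug_alt[of "{g}"]) (auto simp: supp_def)

lemma aug_mul:
  fixes a b :: "'m \<Rightarrow> 'k::comm_ring_1"
  assumes a: "a \<in> KG Mor src tgt p0 p1" and b: "b \<in> KG Mor src tgt p1 p2"
  shows "aug (kmult src tgt cmp a b) = aug a * aug b"
proof -
  define A where "A = supp a"
  define B where "B = supp b"
  have fA: "finite A" and fB: "finite B" and sA: "supp a \<subseteq> A" and sB: "supp b \<subseteq> B"
    using a b by (auto simp: KG_def A_def B_def)
  have comp: "\<And>g1 g2. g1 \<in> A \<Longrightarrow> g2 \<in> B \<Longrightarrow> tgt g1 = src g2"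
    using a b by (auto simp: KG_def hom_def A_def B_def)
  define U where "U = (\<lambda>(g1,g2). cmp g2 g1) ` (A \<times> B)"
  have fU: "finite U" using fA fB by (simp add: U_def)
  have sU: "supp (kmult src tgt cmp a b) \<subseteq> U"
    using kmult_supp[of src tgt cmp a b] by (auto simp: U_def A_def B_def)
  have "aug (kmult src tgt cmp a b) = (\<Sum>h\<in>U. kmult src tgt cmp a b h)" by (rule aug_alt[OF fU sU])
  also have "\<dots> = (\<Sum>h\<in>U. \<Sum>g1\<in>A. \<Sum>g2\<in>B. if tgt g1 = src g2 \<and> cmp g2 g1 = h then a g1 * b g2 else 0)"
    by (rule sum.cong[OF refl], rule kmult_alt[OF fA fB sA sB])
  also have "\<dots> = (\<Sum>g1\<in>A. \<Sum>h\<in>U. \<Sum>g2\<in>B. if tgt g1 = src g2 \<and> cmp g2 g1 = h then a g1 * b g2 else 0)"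
    by (rule sum.swap)
  also have "\<dots> = (\<Sum>g1\<in>A. \<Sum>g2\<in>B. \<Sum>h\<in>U. if tgt g1 = src g2 \<and> cmp g2 g1 = h then a g1 * b g2 else 0)"
    by (rule sum.cong[OF refl], rule sum.swap)
  also have "\<dots> = (\<Sum>g1\<in>A. \<Sum>g2\<in>B. a g1 * b g2)"
    apply (intro sum.cong refl)
    subgoal for g1 g2
      apply (subst collapse[OF fU, where x="cmp g2 g1"])
      using comp by (auto simp: U_def)
    done
  also have "\<dots> = aug a * aug b"
    by (simp add: aug_alt[OF fA sA] aug_alt[OF fB sB] sum_product)
  finally show ?thesis .
qed

lemma KG_empty: "hom Mor src tgt p0 p1 = {} \<Longrightarrow> a \<in> KG Mor src tgt p0 p1 \<Longrightarrow> a = (\<lambda>_. 0)"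
  by (auto simp: KG_def supp_def)

lemma delta_mul:
  assumes "g \<in> Mor" "f \<in> Mor" "tgt g = src f"
  shows "kmult src tgt cmp (\<lambda>x. if x = g then (1::'k::comm_ring_1) else 0) (\<lambda>x. if x = f then 1 else 0)
     = (\<lambda>x. if x = cmp f g then 1 else 0)"
proof
  fix h
  show "kmult src tgt cmp (\<lambda>x. if x = g then (1::'k) else 0) (\<lambda>x. if x = f then 1 else 0) h
     = (if h = cmp f g then 1 else 0)"
    by (subst kmult_alt[of "{g}" "{f}"]) (use assms in \<open>auto simp: supp_def\<close>)
qed

lemma delta_KG: "g \<in> hom Mor src tgt p0 p1 \<Longrightarrow> (\<lambda>x. if x = g then (1::'k::comm_ring_1) else 0) \<in> KG Mor src tgt p0 p1"
  by (auto simp: KG_def supp_def intro: finite_subset[of _ "{g}"])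


abbreviation mul where "mul \<equiv> kmult src tgt cmp"
abbreviation PP where "PP \<equiv> aug_ideal_pow Mor src tgt cmp"
abbreviation KK where "KK \<equiv> KG Mor src tgt"
abbreviation II where "II \<equiv> aug_ideal Mor src tgt"

lemma II_KG: "z \<in> II q \<Longrightarrow> z \<in> KK q q" by (simp add: aug_ideal_def)

lemma P_KG: "q \<in> Obj \<Longrightarrow> x \<in> PP q n \<Longrightarrow> x \<in> KK q q"
proof (induction n arbitrary: x)
  case 0 thus ?case by simp
next
  case (Suc n)
  show ?case using Suc.prems(2) unfolding aug_ideal_pow.simps
    apply (rule span_sub)
    using Suc.IH[OF Suc.prems(1)] by (auto intro: KG_mul KG_zero KG_add KG_neg simp: aug_ideal_def)
qed

lemma P_zero: "(\<lambda>_. 0) \<in> PP q n"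
  by (cases n) (auto intro: KG_zero add_span.zero)
lemma P_add: "x \<in> PP q n \<Longrightarrow> y \<in> PP q n \<Longrightarrow> (\<lambda>g. x g + y g) \<in> PP q n"
  by (cases n) (auto intro: KG_add add_span.add)
lemma P_neg: "x \<in> PP q n \<Longrightarrow> (\<lambda>g. - x g) \<in> PP q n"
  by (cases n) (auto intro: KG_neg add_span.neg)

lemma P_scal:
  assumes q: "q \<in> Obj" shows "x \<in> PP q n \<Longrightarrow> (\<lambda>g. c * x g) \<in> PP q n"
proof (induction n arbitrary: x)
  case 0 thus ?case by (auto intro: KG_scal)
next
  case (Suc n)
  from Suc.prems have "x \<in> add_span {mul u z |u z. u \<in> PP q n \<and> z \<in> II q}" by simp
  then show ?case
  proof induct
    case (gen x)
    then obtain u z where x: "x = mul u z" "u \<in> PP q n" "z \<in> II q" by blast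
    have "(\<lambda>g. c * x g) = mul (\<lambda>g. c * u g) z"
      using x P_KG[OF q x(2)] II_KG[OF x(3)] by (simp add: kmult_scal_left KG_finite)
    thus ?case using Suc.IH[OF x(2)] x(3) by (auto intro!: add_span.gen)
  next
    case zero thus ?case by (simp add: add_span.zero)
  next
    case (add x y) thus ?case by (simp add: distrib_left add_span.add)
  next
    case (neg x) thus ?case by (simp add: add_span.neg)
  qed
qed

lemma P_rid:
  assumes q: "q \<in> Obj" and w: "w \<in> KK q q"
  shows "x \<in> PP q n \<Longrightarrow> mul x w \<in> PP q n"
proof (induction n arbitrary: x)
  case 0 thus ?case using KG_mul w by auto
next
  case (Suc n)
  from Suc.prems have xs: "x \<in> add_span {mul u z |u z. u \<in> PP q n \<and> z \<in> II q}" by simp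
  then show ?case
  proof induct
    case (gen x)
    then obtain u z where x: "x = mul u z" "u \<in> PP q n" "z \<in> II q" by blast
    have uK: "u \<in> KK q q" using P_KG[OF q x(2)] .
    have zK: "z \<in> KK q q" using II_KG[OF x(3)] .
    have "mul x w = mul u (mul z w)"
      using x mul_assoc fin_KG uK zK w by metis
    moreover have "mul z w \<in> II q"
      using aug_mul[OF zK w] x(3) KG_mul[OF zK w] by (simp add: aug_ideal_def)
    ultimately show ?case using x(2) by (auto intro!: add_span.gen)
  next
    case zero thus ?case by (simp add: add_span.zero)
  next
    case (add x y)
    have xK: "x \<in> KK q q" using add(1) P_KG[OF q, of x "Suc n"] by simp
    have yK: "y \<in> KK q q" using add(3) P_KG[OF q, of y "Suc n"] by simp
    have "mul (\<lambda>g. x g + y g) w = (\<lambda>h. mul x w h + mul y w h)"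
      by (rule kmult_add_left[OF KG_finite[OF xK] KG_finite[OF yK] KG_finite[OF w]])
    thus ?case using add by (simp add: add_span.add)
  next
    case (neg x)
    have xK: "x \<in> KK q q" using neg(1) P_KG[OF q, of x "Suc n"] by simp
    have "mul (\<lambda>g. - x g) w = (\<lambda>h. - mul x w h)"
      by (rule kmult_neg_left[OF KG_finite[OF xK] KG_finite[OF w]])
    thus ?case using neg by (simp add: add_span.neg)
  qed
qed

lemma P_mul:
  assumes q: "q \<in> Obj" and x: "x \<in> PP q n1"
  shows "y \<in> PP q n2 \<Longrightarrow> mul x y \<in> PP q (n1 + n2)"
proof (induction n2 arbitrary: y)
  case 0 thus ?case using P_rid[OF q _ x, of y] by simp
next
  case (Suc m)
  from Suc.prems have "y \<in> add_span {mul u z |u z. u \<in> PP q m \<and> z \<in> II q}" by simp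
  then show ?case
  proof induct
    case (gen y)
    then obtain u z where y: "y = mul u z" "u \<in> PP q m" "z \<in> II q" by blast
    have "mul x y = mul (mul x u) z"
      using y mul_assoc fin_KG P_KG[OF q y(2)] II_KG[OF y(3)] P_KG[OF q x] by metis
    thus ?case using Suc.IH[OF y(2)] y(3) by (auto intro!: add_span.gen)
  next
    case zero thus ?case by (simp add: add_span.zero)
  next
    case (add y y')
    have yK: "y \<in> KK q q" using add(1) P_KG[OF q, of y "Suc m"] by simp
    have y'K: "y' \<in> KK q q" using add(3) P_KG[OF q, of y' "Suc m"] by simp
    have "mul x (\<lambda>g. y g + y' g) = (\<lambda>h. mul x y h + mul x y' h)"
      by (rule kmult_add_right[OF KG_finite[OF yK] KG_finite[OF y'K] KG_finite[OF P_KG[OF q x]]])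
    thus ?case using add by (simp add: add_span.add)
  next
    case (neg y)
    have yK: "y \<in> KK q q" using neg(1) P_KG[OF q, of y "Suc m"] by simp
    have "mul x (\<lambda>g. - y g) = (\<lambda>h. - mul x y h)"
      by (rule kmult_neg_right[OF KG_finite[OF yK] KG_finite[OF P_KG[OF q x]]])
    thus ?case using neg by (simp add: add_span.neg)
  qed
qed

lemma P_dec: assumes q: "q \<in> Obj" shows "PP q (Suc n) \<subseteq> PP q n"
proof
  fix x assume "x \<in> PP q (Suc n)"
  thus "x \<in> PP q n" unfolding aug_ideal_pow.simps
    apply (rule span_sub)
    by (auto intro: P_zero P_add P_neg P_rid[OF q] II_KG)
qed

lemma P1: assumes q: "q \<in> Obj" shows "PP q (Suc 0) = II q"
proof
  show "PP q (Suc 0) \<subseteq> II q"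
  proof
    fix x assume "x \<in> PP q (Suc 0)"
    thus "x \<in> II q" unfolding aug_ideal_pow.simps
      apply (rule span_sub)
      subgoal by (auto simp: aug_ideal_def aug_mul intro: KG_mul)
      subgoal by (auto simp: aug_ideal_def intro: KG_zero)
      subgoal by (auto simp: aug_ideal_def aug_add KG_finite intro: KG_add)
      subgoal by (auto simp: aug_ideal_def aug_neg KG_finite intro: KG_neg)
      done
  qed
next
  show "II q \<subseteq> PP q (Suc 0)"
  proof
    fix z assume z: "z \<in> II q"
    have "z = mul (kunit ide q) z" using mul_kunit_left[OF q II_KG[OF z]] by simp
    thus "z \<in> PP q (Suc 0)" using z kunit_KG[OF q] by (auto intro!: add_span.gen)
  qed
qed


lemma P_conj:
  assumes p0: "p0 \<in> Obj" and p1: "p1 \<in> Obj"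
    and e: "e \<in> KK p0 p1" and e': "e' \<in> KK p1 p0" and ee: "mul e' e = kunit ide p1"
  shows "x \<in> PP p1 n \<Longrightarrow> mul (mul e x) e' \<in> PP p0 n"
proof (induction n arbitrary: x)
  case 0
  hence "x \<in> KK p1 p1" by simp
  thus ?case using KG_mul[OF KG_mul[OF e] e'] by simp
next
  case (Suc n)
  from Suc.prems have "x \<in> add_span {mul u z |u z. u \<in> PP p1 n \<and> z \<in> II p1}" by simp
  then show ?case
  proof induct
    case (gen x)
    then obtain u z where x: "x = mul u z" "u \<in> PP p1 n" "z \<in> II p1" by blast
    have uK: "u \<in> KK p1 p1" using P_KG[OF p1 x(2)] .
    have zK: "z \<in> KK p1 p1" using II_KG[OF x(3)] .
    have fe: "fin e" "fin e'" "fin u" "fin z" using e e' uK zK by (auto intro: fin_KG)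
    have ze: "mul z e' \<in> KK p1 p0" using KG_mul[OF zK e'] .
    have canc: "mul e' (mul e (mul z e')) = mul z e'"
    proof -
      have "mul e' (mul e (mul z e')) = mul (mul e' e) (mul z e')"
        by (rule mul_assoc[symmetric]) (use fe fin_mul in auto)
      also have "\<dots> = mul z e'" unfolding ee by (rule mul_kunit_left[OF p1 ze])
      finally show ?thesis .
    qed
    have eq: "mul (mul e x) e' = mul (mul (mul e u) e') (mul (mul e z) e')"
      using fe canc by (simp add: x(1) mul_assoc fin_mul)
    have ez: "mul (mul e z) e' \<in> II p0"
    proof -
      have k: "mul (mul e z) e' \<in> KK p0 p0" using KG_mul[OF KG_mul[OF e zK] e'] .
      have "aug (mul (mul e z) e') = 0"
        using aug_mul[OF KG_mul[OF e zK] e'] aug_mul[OF e zK] x(3) by (simp add: aug_ideal_def)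
      thus ?thesis using k by (simp add: aug_ideal_def)
    qed
    show ?case unfolding eq using Suc.IH[OF x(2)] ez by (auto intro!: add_span.gen)
  next
    case zero thus ?case by (simp add: add_span.zero)
  next
    case (add x y)
    have xK: "x \<in> KK p1 p1" "y \<in> KK p1 p1"
      using add(1) P_KG[OF p1, of x "Suc n"] add(3) P_KG[OF p1, of y "Suc n"] by simp_all
    have "mul (mul e (\<lambda>g. x g + y g)) e' = (\<lambda>h. mul (mul e x) e' h + mul (mul e y) e' h)"
      using xK e e' by (simp add: kmult_add_right kmult_add_left KG_finite kmult_supp_finite)
    thus ?case using add by (simp add: add_span.add)
  next
    case (neg x)
    have xK: "x \<in> KK p1 p1" using neg(1) P_KG[OF p1, of x "Suc n"] by simp
    have "mul (mul e (\<lambda>g. - x g)) e' = (\<lambda>h. - mul (mul e x) e' h)"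
      using xK e e' by (simp add: kmult_neg_right kmult_neg_left KG_finite kmult_supp_finite)
    thus ?case using neg by (simp add: add_span.neg)
  qed
qed

lemma foldr_KG: "q \<in> Obj \<Longrightarrow> set xs \<subseteq> KK q q \<Longrightarrow> z \<in> KK q q \<Longrightarrow> foldr mul xs z \<in> KK q q"
  by (induction xs) (auto intro: KG_mul)

lemma foldr_mul:
  assumes q: "q \<in> Obj" and z: "z \<in> KK q q"
  shows "set xs \<subseteq> KK q q \<Longrightarrow> mul (foldr mul xs (kunit ide q)) z = foldr mul xs z"
proof (induction xs)
  case Nil thus ?case using mul_kunit_left[OF q z] by simp
next
  case (Cons x xs)
  have f: "fin x" "fin (foldr mul xs (kunit ide q))" "fin z"
    using Cons.prems foldr_KG[OF q _ kunit_KG[OF q], of xs] z by (auto intro: fin_KG)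
  show ?case using Cons mul_assoc[OF f] by simp
qed

lemma G_KG: "q \<in> Obj \<Longrightarrow> y \<in> add_span {foldr mul xs (kunit ide q) | xs. length xs = m \<and> set xs \<subseteq> PP q 1} \<Longrightarrow> y \<in> KK q q"
proof -
  assume q: "q \<in> Obj" and y: "y \<in> add_span {foldr mul xs (kunit ide q) | xs. length xs = m \<and> set xs \<subseteq> PP q 1}"
  show ?thesis using y
  proof (rule span_sub)
    show "{foldr mul xs (kunit ide q) | xs. length xs = m \<and> set xs \<subseteq> PP q 1} \<subseteq> KK q q"
    proof
      fix y assume "y \<in> {foldr mul xs (kunit ide q) | xs. length xs = m \<and> set xs \<subseteq> PP q 1}"
      then obtain xs where xs: "y = foldr mul xs (kunit ide q)" "set xs \<subseteq> PP q 1" by blast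
      have "set xs \<subseteq> KK q q" using xs(2) P_KG[OF q, of _ 1] by blast
      thus "y \<in> KK q q" using xs(1) foldr_KG[OF q _ kunit_KG[OF q]] by simp
    qed
  qed (auto intro: KG_zero KG_add KG_neg)
qed

lemma C4_aux:
  assumes q: "q \<in> Obj"
  shows "(PP q (Suc n) :: ('m \<Rightarrow> 'k::comm_ring_1) set) \<subseteq> add_span {foldr mul xs (kunit ide q) | xs. length xs = Suc n \<and> set xs \<subseteq> PP q 1}"
proof (induction n)
  case 0
  show ?case
  proof
    fix x assume x: "x \<in> PP q (Suc 0)"
    have "x = foldr mul [x] (kunit ide q)"
      using mul_kunit_right[OF q P_KG[OF q x]] by simp
    thus "x \<in> add_span {foldr mul xs (kunit ide q) | xs. length xs = Suc 0 \<and> set xs \<subseteq> PP q 1}"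
      using x by (intro add_span.gen) (auto intro!: exI[of _ "[x]"])
  qed
next
  case (Suc n)
  let ?G = "\<lambda>m. add_span {foldr mul xs (kunit ide q) | xs. length xs = m \<and> set xs \<subseteq> PP q 1}"
  have key: "y \<in> ?G (Suc n) \<Longrightarrow> z \<in> II q \<Longrightarrow> mul y z \<in> ?G (Suc (Suc n))" for y z
  proof (induction rule: add_span.induct)
    case (gen y)
    then obtain xs where y: "y = foldr mul xs (kunit ide q)" "length xs = Suc n" "set xs \<subseteq> PP q 1" by blast
    have xsK: "set xs \<subseteq> KK q q" using y(3) P_KG[OF q, of _ 1] by blast
    have zK: "z \<in> KK q q" using II_KG[OF gen(2)] .
    have "mul y z = foldr mul xs z" using foldr_mul[OF q zK xsK] y(1) by simp
    also have "\<dots> = foldr mul (xs @ [z]) (kunit ide q)" using mul_kunit_right[OF q zK] by simp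
    finally have eq: "mul y z = foldr mul (xs @ [z]) (kunit ide q)" .
    have zP: "z \<in> PP q 1" unfolding One_nat_def by (subst P1[OF q]) (rule gen(2))
    have "set (xs @ [z]) \<subseteq> PP q 1" "length (xs @ [z]) = Suc (Suc n)" using y(2,3) zP by auto
    hence "mul y z \<in> {foldr mul xs (kunit ide q) | xs. length xs = Suc (Suc n) \<and> set xs \<subseteq> PP q 1}"
      unfolding eq by blast
    thus ?case by (rule add_span.gen)
  next
    case zero thus ?case by (simp add: add_span.zero)
  next
    case (add x y)
    have "x \<in> KK q q" "y \<in> KK q q" using add G_KG[OF q] by auto
    hence "mul (\<lambda>g. x g + y g) z = (\<lambda>h. mul x z h + mul y z h)"
      using II_KG[OF add(5)] by (simp add: kmult_add_left KG_finite)
    thus ?case using add by (simp add: add_span.add)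
  next
    case (neg x)
    have "x \<in> KK q q" using neg G_KG[OF q] by auto
    hence "mul (\<lambda>g. - x g) z = (\<lambda>h. - mul x z h)"
      using II_KG[OF neg(3)] by (simp add: kmult_neg_left KG_finite)
    thus ?case using neg by (simp add: add_span.neg)
  qed
  show ?case
  proof
    fix x :: "'m \<Rightarrow> 'k" assume "x \<in> PP q (Suc (Suc n))"
    hence "x \<in> add_span {mul u z |u z. u \<in> (PP q (Suc n) :: ('m \<Rightarrow> 'k) set) \<and> z \<in> II q}" by simp
    thus "x \<in> ?G (Suc (Suc n))"
    proof (rule span_sub)
      show "{mul u z |u z. u \<in> (PP q (Suc n) :: ('m \<Rightarrow> 'k) set) \<and> z \<in> II q} \<subseteq> ?G (Suc (Suc n))"
      proof
        fix y assume "y \<in> {mul u z |u z. u \<in> (PP q (Suc n) :: ('m \<Rightarrow> 'k) set) \<and> z \<in> II q}"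
        then obtain u z where uz: "y = mul u z" "u \<in> PP q (Suc n)" "z \<in> II q" by blast
        have "u \<in> ?G (Suc n)" by (rule subsetD[OF Suc.IH uz(2)])
        thus "y \<in> ?G (Suc (Suc n))" using key uz(1,3) by simp
      qed
    qed (auto intro: add_span.zero add_span.add add_span.neg)
  qed
qed


definition FF :: "nat \<Rightarrow> 'o \<Rightarrow> 'o \<Rightarrow> ('m \<Rightarrow> 'k::comm_ring_1) set" where
  "FF n p0 p1 = {a \<in> KK p0 p1. \<forall>b \<in> KK p1 p0. mul a b \<in> PP p0 n}"

lemma FF_qq: assumes q: "q \<in> Obj" shows "FF n q q = PP q n"
proof
  show "FF n q q \<subseteq> PP q n"
  proof
    fix a assume "a \<in> FF n q q"
    hence aK: "a \<in> KK q q" and m: "mul a (kunit ide q) \<in> PP q n" using kunit_KG[OF q] by (auto simp: FF_def)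
    thus "a \<in> PP q n" using mul_kunit_right[OF q aK] by simp
  qed
next
  show "PP q n \<subseteq> FF n q q"
    using P_KG[OF q] P_rid[OF q] by (auto simp: FF_def)
qed

lemma FF_mult:
  fixes a a' :: "'m \<Rightarrow> 'k::comm_ring_1"
  assumes p0: "p0 \<in> Obj" and p1: "p1 \<in> Obj" and p2: "p2 \<in> Obj"
    and a: "a \<in> FF n1 p0 p1" and a': "a' \<in> FF n2 p1 p2"
  shows "mul a a' \<in> FF (n1 + n2) p0 p2"
proof -
  have aK: "a \<in> KK p0 p1" and a'K: "a' \<in> KK p1 p2" using a a' by (auto simp: FF_def)
  have "\<forall>b\<in>KK p2 p0. mul (mul a a') b \<in> PP p0 (n1 + n2)"
  proof
    fix b :: "'m \<Rightarrow> 'k" assume b: "b \<in> KK p2 p0"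
    show "mul (mul a a') b \<in> PP p0 (n1 + n2)"
    proof (cases "hom Mor src tgt p0 p1 = {}")
      case True
      hence "a = (\<lambda>_. 0)" using KG_empty aK by blast
      thus ?thesis using P_zero by simp
    next
      case False
      then obtain \<gamma> where g: "\<gamma> \<in> hom Mor src tgt p0 p1" by blast
      hence gM: "\<gamma> \<in> Mor" "src \<gamma> = p0" "tgt \<gamma> = p1" by (auto simp: hom_def)
      then obtain \<gamma>' where g': "\<gamma>' \<in> Mor" "src \<gamma>' = p1" "tgt \<gamma>' = p0"
        "cmp \<gamma>' \<gamma> = ide p0" "cmp \<gamma> \<gamma>' = ide p1" using invex by metis
      define e where "e = (\<lambda>x. if x = \<gamma> then (1::'k) else 0)"
      define e' where "e' = (\<lambda>x. if x = \<gamma>' then (1::'k) else 0)"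
      have eK: "e \<in> KK p0 p1" unfolding e_def by (rule delta_KG[OF g])
      have e'K: "e' \<in> KK p1 p0" unfolding e'_def by (rule delta_KG) (use g' in \<open>simp add: hom_def\<close>)
      have ee': "mul e e' = kunit ide p0"
        unfolding e_def e'_def kunit_def using delta_mul[of \<gamma> \<gamma>'] gM g' by simp
      have e'e: "mul e' e = kunit ide p1"
        unfolding e_def e'_def kunit_def using delta_mul[of \<gamma>' \<gamma>] gM g' by simp
      have u: "mul a e' \<in> PP p0 n1" using a e'K by (simp add: FF_def)
      have be: "mul b e \<in> KK p2 p1" using KG_mul[OF b eK] .
      have v: "mul a' (mul b e) \<in> PP p1 n2" using a' be by (simp add: FF_def)
      have w: "mul (mul e (mul a' (mul b e))) e' \<in> PP p0 n2"
        by (rule P_conj[OF p0 p1 eK e'K e'e v])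
      have uw: "mul (mul a e') (mul (mul e (mul a' (mul b e))) e') \<in> PP p0 (n1 + n2)"
        by (rule P_mul[OF p0 u w])
      have f: "fin a" "fin a'" "fin b" "fin e" "fin e'" using aK a'K b eK e'K by (auto intro: fin_KG)
      have a'b: "mul a' b \<in> KK p1 p0" using KG_mul[OF a'K b] .
      have canc: "mul e' (mul e (mul a' b)) = mul a' b"
      proof -
        have "mul e' (mul e (mul a' b)) = mul (mul e' e) (mul a' b)"
          by (rule mul_assoc[symmetric]) (use f fin_mul in auto)
        also have "\<dots> = mul a' b" unfolding e'e by (rule mul_kunit_left[OF p1 a'b])
        finally show ?thesis .
      qed
      have bk: "mul b (kunit ide p0) = b" using mul_kunit_right[OF p0 b] .
      have "mul (mul a e') (mul (mul e (mul a' (mul b e))) e') = mul (mul a a') b"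
        using f by (simp add: mul_assoc fin_mul ee' bk canc)
      thus ?thesis using uw by simp
    qed
  qed
  thus ?thesis using KG_mul[OF aK a'K] by (simp add: FF_def)
qed

lemma FF_filt: "is_filtration Obj Mor src tgt cmp (FF :: nat \<Rightarrow> 'o \<Rightarrow> 'o \<Rightarrow> ('m \<Rightarrow> 'k::comm_ring_1) set)"
  unfolding is_filtration_def
proof (intro conjI ballI allI)
  fix p0 p1 assume p0: "p0 \<in> Obj" and p1: "p1 \<in> Obj"
  show "(FF 0 p0 p1 :: ('m \<Rightarrow> 'k) set) = KK p0 p1"
    using KG_mul by (auto simp: FF_def)
  fix n
  show "is_submodule (FF n p0 p1 :: ('m \<Rightarrow> 'k) set) (KK p0 p1)"
    unfolding is_submodule_def
  proof (intro conjI ballI allI)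
    show "(FF n p0 p1 :: ('m \<Rightarrow> 'k) set) \<subseteq> KK p0 p1" by (auto simp: FF_def)
    show "(\<lambda>_. 0) \<in> (FF n p0 p1 :: ('m \<Rightarrow> 'k) set)" using KG_zero P_zero by (auto simp: FF_def)
  next
    fix x y :: "'m \<Rightarrow> 'k" assume x: "x \<in> FF n p0 p1" and y: "y \<in> FF n p0 p1"
    have xK: "x \<in> KK p0 p1" and yK: "y \<in> KK p0 p1" using x y by (auto simp: FF_def)
    show "(\<lambda>g. x g + y g) \<in> FF n p0 p1" unfolding FF_def
    proof (intro CollectI conjI ballI)
      show "(\<lambda>g. x g + y g) \<in> KK p0 p1" using KG_add[OF xK yK] .
      fix b :: "'m \<Rightarrow> 'k" assume b: "b \<in> KK p1 p0"
      have "mul (\<lambda>g. x g + y g) b = (\<lambda>h. mul x b h + mul y b h)"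
        by (rule kmult_add_left[OF KG_finite[OF xK] KG_finite[OF yK] KG_finite[OF b]])
      moreover have "mul x b \<in> PP p0 n" "mul y b \<in> PP p0 n" using x y b by (auto simp: FF_def)
      ultimately show "mul (\<lambda>g. x g + y g) b \<in> PP p0 n" using P_add by simp
    qed
  next
    fix c and x :: "'m \<Rightarrow> 'k" assume x: "x \<in> FF n p0 p1"
    have xK: "x \<in> KK p0 p1" using x by (auto simp: FF_def)
    show "(\<lambda>g. c * x g) \<in> FF n p0 p1" unfolding FF_def
    proof (intro CollectI conjI ballI)
      show "(\<lambda>g. c * x g) \<in> KK p0 p1" using KG_scal[OF xK] .
      fix b :: "'m \<Rightarrow> 'k" assume b: "b \<in> KK p1 p0"
      have "mul (\<lambda>g. c * x g) b = (\<lambda>h. c * mul x b h)"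
        by (rule kmult_scal_left[OF KG_finite[OF xK] KG_finite[OF b]])
      moreover have "mul x b \<in> PP p0 n" using x b by (auto simp: FF_def)
      ultimately show "mul (\<lambda>g. c * x g) b \<in> PP p0 n" using P_scal[OF p0] by simp
    qed
  qed
  show "(FF (Suc n) p0 p1 :: ('m \<Rightarrow> 'k) set) \<subseteq> FF n p0 p1"
    using P_dec[OF p0] by (auto simp: FF_def)
next
  fix p0 p1 p2 n1 n2 and a b :: "'m \<Rightarrow> 'k"
  assume "p0 \<in> Obj" "p1 \<in> Obj" "p2 \<in> Obj" "a \<in> FF n1 p0 p1" "b \<in> FF n2 p1 p2"
  thus "mul a b \<in> FF (n1 + n2) p0 p2" by (rule FF_mult)
qed

lemma FF_C1: "cond_C1 Obj Mor src tgt (FF :: nat \<Rightarrow> 'o \<Rightarrow> 'o \<Rightarrow> ('m \<Rightarrow> 'k::comm_ring_1) set)"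
  unfolding cond_C1_def
proof
  fix q assume q: "q \<in> Obj"
  show "\<exists>\<phi> :: ('m \<Rightarrow> 'k) \<Rightarrow> 'k.
        (\<forall>x\<in>KK q q. \<forall>y\<in>KK q q. \<phi> (\<lambda>g. x g + y g) = \<phi> x + \<phi> y) \<and>
        (\<forall>c. \<forall>x\<in>KK q q. \<phi> (\<lambda>g. c * x g) = c * \<phi> x) \<and>
        \<phi> ` KK q q = UNIV \<and>
        {x \<in> KK q q. \<phi> x = 0} = FF 1 q q"
  proof (intro exI[of _ aug] conjI ballI allI)
    fix x y :: "'m \<Rightarrow> 'k" assume "x \<in> KK q q" "y \<in> KK q q"
    thus "aug (\<lambda>g. x g + y g) = aug x + aug y" by (simp add: aug_add KG_finite)
  next
    fix c and x :: "'m \<Rightarrow> 'k" assume "x \<in> KK q q"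
    thus "aug (\<lambda>g. c * x g) = c * aug x" by (simp add: aug_scal KG_finite)
  next
    show "aug ` KK q q = (UNIV :: 'k set)"
    proof (intro set_eqI iffI)
      fix c :: 'k
      have k: "(\<lambda>g. c * kunit ide q g) \<in> KK q q" using KG_scal[OF kunit_KG[OF q]] .
      have ad: "aug (kunit ide q :: 'm \<Rightarrow> 'k) = 1" unfolding kunit_def by (rule aug_delta)
      have "aug (\<lambda>g. c * kunit ide q g) = c"
        using aug_scal[OF KG_finite[OF kunit_KG[OF q]], of c] ad by simp
      thus "c \<in> aug ` KK q q" using k by force
    qed auto
  next
    have fa: "(FF 1 q q :: ('m \<Rightarrow> 'k) set) = PP q 1" by (rule FF_qq[OF q])
    have fb: "(PP q 1 :: ('m \<Rightarrow> 'k) set) = II q" unfolding One_nat_def by (rule P1[OF q])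
    have "(FF 1 q q :: ('m \<Rightarrow> 'k) set) = II q" using fa fb by (rule trans)
    thus "{x \<in> KK q q. aug x = 0} = (FF 1 q q :: ('m \<Rightarrow> 'k) set)"
      by (simp add: aug_ideal_def)
  qed
qed

lemma FF_C4: "cond_C4 Obj src tgt cmp ide (FF :: nat \<Rightarrow> 'o \<Rightarrow> 'o \<Rightarrow> ('m \<Rightarrow> 'k::comm_ring_1) set)"
  unfolding cond_C4_def
proof (intro ballI allI impI)
  fix q and n :: nat assume q: "q \<in> Obj" and n: "1 \<le> n"
  then obtain m where m: "n = Suc m" by (cases n) auto
  show "(FF n q q :: ('m \<Rightarrow> 'k) set) \<subseteq> add_span {foldr mul xs (kunit ide q) |xs. length xs = n \<and> set xs \<subseteq> FF 1 q q}"
    unfolding FF_qq[OF q] m by (rule C4_aux[OF q])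
qed

end

theorem proposition2p1p1:
  fixes Obj :: "'o set" and Mor :: "'m set" and src tgt :: "'m \<Rightarrow> 'o"
    and cmp :: "'m \<Rightarrow> 'm \<Rightarrow> 'm" and ide :: "'o \<Rightarrow> 'm"
  assumes "groupoid Obj Mor src tgt cmp ide"
  shows "\<exists>F :: nat \<Rightarrow> 'o \<Rightarrow> 'o \<Rightarrow> ('m \<Rightarrow> 'k::comm_ring_1) set.
           is_filtration Obj Mor src tgt cmp F \<and>
           (\<forall>q\<in>Obj. \<forall>n. F n q q = aug_ideal_pow Mor src tgt cmp q n) \<and>
           cond_C1 Obj Mor src tgt F \<and>
           cond_C4 Obj src tgt cmp ide F"
proof -
  interpret G: grpd Obj Mor src tgt cmp ide by (rule grpd.intro) (rule assms)
  show ?thesis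
    by (rule exI[of _ G.FF]) (simp add: G.FF_filt G.FF_qq G.FF_C1 G.FF_C4)
qed

end
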